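(* Let $n\ge2$ and let $\varphi$ be a skew morphism of $\mathbb{Z}_n$ with odd complexity and auto-order $m$. Then $\varphi$ is uniquely determined by the triple $(\varphi(1),\varphi',\varphi^m)$: if $\psi$ is any skew morphism of $\mathbb{Z}_n$ with odd complexity such that $\psi(1)=\varphi(1)$, $\psi'=\varphi'$ and $\psi^m=\varphi^m$, then $\psi=\varphi$.
   Context: $\mathbb{Z}_n$ is the cyclic group of integers modulo $n$. A skew morphism of a finite group $G$ is a permutation $\varphi$ of $G$ fixing the identity such that for each $a\in G$ there is a non-negative integer $i_a$ with $\varphi(ab)=\varphi(a)\varphi^{i_a}(b)$ for all $b\in G$. ${\rm ord}(\varphi)$ is the order of $\langle\varphi\rangle$. If $\varphi$ is non-trivial, $\pi_\varphi(a)$ is the unique such $i_a\in\{1,\dots,{\rm ord}(\varphi)-1\}$; if $\varphi$ is the identity, $\pi_\varphi(a)=1$. Let $\sigma_\varphi(x,y)=\sum_{i=0}^{x-1}\pi_\varphi(\varphi^i(y))\in\mathbb{Z}_{{\rm ord}(\varphi)}$. The derived skew morphism $\varphi'$ of a skew morphism $\varphi$ of $\mathbb{Z}_n$ is the skew morphism of $\mathbb{Z}_{{\rm ord}(\varphi)}$ given by $\varphi'(a)=\sigma_\varphi(a,1)$. Set $\varphi^{(0)}=\varphi$, $\varphi^{(i+1)}=(\varphi^{(i)})'$. For $n\ge 2$ the complexity of $\varphi$ is the unique non-negative integer $c$ such that $\varphi^{(c)}$ is a skew morphism of a non-trivial cyclic group $\mathbb{Z}_m$ and $\varphi^{(c+1)}$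 is a skew morphism of $\mathbb{Z}_1$; $m$ is the auto-order of $\varphi$. *)

theory Defs
  imports Main
begin

text \<open>The cyclic group Z_n is represented by the carrier {..<n} of naturals with
addition modulo n (identity 0). A map on Z_n is a function nat => nat; only its
values on {..<n} matter.\<close>

definition skew_morphism :: "nat \<Rightarrow> (nat \<Rightarrow> nat) \<Rightarrow> bool" where
  "skew_morphism n \<phi> \<longleftrightarrow> 1 \<le> n \<and> bij_betw \<phi> {..<n} {..<n} \<and> \<phi> 0 = 0 \<and>
     (\<forall>a<n. \<exists>i::nat. \<forall>b<n. \<phi> ((a + b) mod n) = (\<phi> a + (\<phi> ^^ i) b) mod n)"

definition skew_ord :: "nat \<Rightarrow> (nat \<Rightarrow> nat) \<Rightarrow> nat" where
  "skew_ord n \<phi> = (LEAST k. 0 < k \<and> (\<forall>x<n. (\<phi> ^^ k) x = x))"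

definition skew_pi :: "nat \<Rightarrow> (nat \<Rightarrow> nat) \<Rightarrow> nat \<Rightarrow> nat" where
  "skew_pi n \<phi> a = (if \<forall>x<n. \<phi> x = x then 1 else
     (THE i. i \<in> {1..<skew_ord n \<phi>} \<and>
        (\<forall>b<n. \<phi> ((a + b) mod n) = (\<phi> a + (\<phi> ^^ i) b) mod n)))"

definition skew_sigma :: "nat \<Rightarrow> (nat \<Rightarrow> nat) \<Rightarrow> nat \<Rightarrow> nat \<Rightarrow> nat" where
  "skew_sigma n \<phi> x y = (\<Sum>i<x. skew_pi n \<phi> ((\<phi> ^^ i) y)) mod skew_ord n \<phi>"

text \<open>The derived skew morphism phi' of Z_ord(phi): phi'(a) = sigma_phi(a,1).
 (The element 1 of Z_n is 1 mod n.)\<close>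
definition derived :: "nat \<Rightarrow> (nat \<Rightarrow> nat) \<Rightarrow> (nat \<Rightarrow> nat)" where
  "derived n \<phi> = (\<lambda>a. skew_sigma n \<phi> a (1 mod n))"

text \<open>Iterated derivation: (size of the cyclic group, map) for phi^(k).\<close>
fun derived_iter :: "nat \<Rightarrow> (nat \<Rightarrow> nat) \<Rightarrow> nat \<Rightarrow> nat \<times> (nat \<Rightarrow> nat)" where
  "derived_iter n \<phi> 0 = (n, \<phi>)"
| "derived_iter n \<phi> (Suc k) =
     (case derived_iter n \<phi> k of (m, f) \<Rightarrow> (skew_ord m f, derived m f))"

definition complexity :: "nat \<Rightarrow> (nat \<Rightarrow> nat) \<Rightarrow> nat" where
  "complexity n \<phi> = (THE c. 2 \<le> fst (derived_iter n \<phi> c) \<and> fst (derived_iter n \<phi> (Suc c)) = 1)"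

definition auto_order :: "nat \<Rightarrow> (nat \<Rightarrow> nat) \<Rightarrow> nat" where
  "auto_order n \<phi> = fst (derived_iter n \<phi> (complexity n \<phi>))"

end

theory Submission
  imports Defs "HOL-Library.FuncSet"
begin


lemma mod_add_cancel_lt:
  fixes x y z N :: nat
  assumes "(x + y) mod N = (x + z) mod N" "y < N" "z < N"
  shows "y = z"
proof -
  have "int ((x + y) mod N) = int ((x + z) mod N)" using assms(1) by simp
  then have "(int x + int y) mod int N = (int x + int z) mod int N" by (simp add: zmod_int)
  then have "int y mod int N = int z mod int N"
    by (metis add.commute add_diff_cancel_right' mod_diff_left_eq)
  then have "y mod N = z mod N" by (simp add: zmod_int[symmetric])
  then show ?thesis using assms(2,3) by simp
qed

locale skew =
  fixes N :: nat and f :: "nat \<Rightarrow> nat"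
  assumes sk: "skew_morphism N f"
begin

abbreviation M where "M \<equiv> skew_ord N f"
abbreviation pp where "pp \<equiv> skew_pi N f"
abbreviation sg where "sg k a \<equiv> (\<Sum>i<k. pp ((f^^i) a))"
definition valid where "valid a i \<longleftrightarrow> (\<forall>b<N. f ((a + b) mod N) = (f a + (f ^^ i) b) mod N)"

lemma N_pos: "1 \<le> N" and bij: "bij_betw f {..<N} {..<N}" and f0: "f 0 = 0"
  and skewp: "a < N \<Longrightarrow> \<exists>i. valid a i"
  using sk unfolding skew_morphism_def valid_def by auto

lemma f_lt: "x < N \<Longrightarrow> f x < N"
  using bij by (auto simp: bij_betw_def)

lemma fpow_lt: "x < N \<Longrightarrow> (f^^k) x < N"
  by (induction k) (auto simp: f_lt)

lemma fpow0: "(f^^k) 0 = 0"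
  by (induction k) (auto simp: f0)

lemma f_inj: "inj_on f {..<N}"
  using bij by (auto simp: bij_betw_def)

lemma fpow_inj: "inj_on (f^^k) {..<N}"
proof (induction k)
  case 0 then show ?case by simp
next
  case (Suc k)
  show ?case
  proof (rule inj_onI)
    fix x y assume "x \<in> {..<N}" "y \<in> {..<N}" "(f^^Suc k) x = (f^^Suc k) y"
    then have "(f^^k) x = (f^^k) y"
      using f_inj fpow_lt by (auto simp: inj_on_def)
    then show "x = y" using Suc \<open>x \<in> _\<close> \<open>y \<in> _\<close> by (auto simp: inj_on_def)
  qed
qed

lemma fpow_cancel: "x < N \<Longrightarrow> y < N \<Longrightarrow> (f^^k) x = (f^^k) y \<Longrightarrow> x = y"
  using fpow_inj[of k] by (auto simp: inj_on_def)

lemma ord_ex: "\<exists>k>0. \<forall>x<N. (f^^k) x = x"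
proof -
  define R where "R k = restrict (f^^k) {..<N}" for k
  have "R k \<in> {..<N} \<rightarrow>\<^sub>E {..<N}" for k
    unfolding R_def by (rule restrict_PiE_iff[THEN iffD2]) (auto simp: fpow_lt)
  then have "R ` UNIV \<subseteq> {..<N} \<rightarrow>\<^sub>E {..<N}" by blast
  moreover have "finite ({..<N} \<rightarrow>\<^sub>E {..<N::nat})" by (simp add: finite_PiE)
  ultimately have "finite (R ` UNIV)" by (rule finite_subset)
  then have "\<not> inj R" using finite_imageD infinite_UNIV_nat by blast
  then obtain i j where ij: "i \<noteq> j" "R i = R j" by (auto simp: inj_def)
  obtain a b where ab: "a < b" "R a = R b"
    using ij by (metis linorder_neqE_nat)
  have "\<forall>x<N. (f^^(b-a)) x = x"
  proof (intro allI impI)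
    fix x assume x: "x < N"
    have "(f^^a) ((f^^(b-a)) x) = (f^^b) x"
      using ab(1) by (metis funpow_add le_add_diff_inverse less_imp_le o_apply)
    also have "\<dots> = (f^^a) x" using ab(2) x unfolding R_def by (metis lessThan_iff restrict_apply')
    finally show "(f^^(b-a)) x = x" using fpow_cancel x fpow_lt by blast
  qed
  then show ?thesis using ab(1) by (intro exI[of _ "b-a"]) auto
qed

lemma M_prop: "0 < M \<and> (\<forall>x<N. (f^^M) x = x)"
  unfolding skew_ord_def by (rule LeastI_ex) (use ord_ex in auto)

lemma M_pos: "0 < M" and M_id: "x < N \<Longrightarrow> (f^^M) x = x"
  using M_prop by auto

lemma M_min: "0 < k \<Longrightarrow> k < M \<Longrightarrow> \<exists>x<N. (f^^k) x \<noteq> x"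
  unfolding skew_ord_def using not_less_Least by blast

lemma M_le: "0 < k \<Longrightarrow> \<forall>x<N. (f^^k) x = x \<Longrightarrow> M \<le> k"
  unfolding skew_ord_def by (rule Least_le) auto

lemma fpowM_mult: "x < N \<Longrightarrow> (f^^(M*t)) x = x"
proof (induction t)
  case 0 then show ?case by simp
next
  case (Suc t)
  have "(f^^(M*Suc t)) x = (f^^M) ((f^^(M*t)) x)" by (simp add: funpow_add)
  then show ?case using Suc M_id by simp
qed

lemma fpow_mod: "x < N \<Longrightarrow> (f^^k) x = (f^^(k mod M)) x"
proof -
  assume x: "x < N"
  have "k = k mod M + M * (k div M)" by simp
  then have "(f^^k) x = (f^^(k mod M)) ((f^^(M * (k div M))) x)"
    by (metis funpow_add o_apply)
  then show ?thesis using fpowM_mult x by simp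
qed

lemma fpow_eq_mod_aux: "j \<le> k \<Longrightarrow> \<forall>x<N. (f^^j) x = (f^^k) x \<Longrightarrow> j mod M = k mod M"
proof -
  assume jk: "j \<le> k" and e: "\<forall>x<N. (f^^j) x = (f^^k) x"
  define d where "d = k - j"
  have kd: "k = d + j" using jk d_def by simp
  have d1: "\<forall>x<N. (f^^d) x = x"
  proof (intro allI impI)
    fix x assume x: "x < N"
    have "(f^^j) ((f^^d) x) = (f^^j) x"
      using e x kd by (metis add.commute funpow_add o_apply)
    then show "(f^^d) x = x" using fpow_cancel fpow_lt x by blast
  qed
  have "\<forall>x<N. (f^^(d mod M)) x = x" using d1 fpow_mod by metis
  then have "d mod M = 0" using M_min[of "d mod M"] M_pos by (metis mod_less_divisor neq0_conv)
  then show ?thesis using kd by (simp add: mod_add_left_eq[symmetric])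
qed

lemma fpow_eq_mod: "\<forall>x<N. (f^^j) x = (f^^k) x \<Longrightarrow> j mod M = k mod M"
  using fpow_eq_mod_aux[of j k] fpow_eq_mod_aux[of k j] by (metis nat_le_linear)

lemma valid_unique: "valid a i \<Longrightarrow> valid a j \<Longrightarrow> i mod M = j mod M"
proof -
  assume vi: "valid a i" and vj: "valid a j"
  have "\<forall>x<N. (f^^i) x = (f^^j) x"
  proof (intro allI impI)
    fix x assume x: "x < N"
    have "(f a + (f^^i) x) mod N = (f a + (f^^j) x) mod N" using vi vj x by (simp add: valid_def)
    then show "(f^^i) x = (f^^j) x" using mod_add_cancel_lt fpow_lt x by blast
  qed
  then show ?thesis by (rule fpow_eq_mod)
qed

end


context skew begin

lemma triv_M: "(\<forall>x<N. f x = x) \<Longrightarrow> M = 1"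
  using M_le[of 1] M_pos by simp

lemma M_triv: "M = 1 \<Longrightarrow> x < N \<Longrightarrow> f x = x"
  using M_id[of x] by simp

lemma valid_zero_triv:
  assumes a: "a < N" and v: "valid a 0"
  shows "\<forall>x<N. f x = x"
proof -
  have "N > 0" using N_pos by simp
  define b where "b = (N - a) mod N"
  have b: "b < N" using \<open>N>0\<close> b_def by simp
  have "(a + b) mod N = (a + (N - a)) mod N" by (simp add: b_def mod_add_right_eq)
  also have "a + (N - a) = N" using a by simp
  finally have "(a + b) mod N = 0" by simp
  moreover have "f ((a + b) mod N) = (f a + b) mod N" using v b by (simp add: valid_def)
  ultimately have "0 = (f a + b) mod N" using f0 by simp
  then have "(f a + b) mod N = (a + b) mod N" using \<open>(a + b) mod N = 0\<close> by simp
  then have fa: "f a = a" using mod_add_cancel_lt[of b "f a" N a] f_lt a by (simp add: add.commute)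
  show ?thesis
  proof (intro allI impI)
    fix x assume x: "x < N"
    define c where "c = (x + N - a) mod N"
    have c: "c < N" using \<open>N>0\<close> c_def by simp
    have "(a + c) mod N = (a + (x + N - a)) mod N" by (simp add: c_def mod_add_right_eq)
    also have "a + (x + N - a) = x + N" using a by simp
    finally have "(a + c) mod N = x" using x by simp
    then show "f x = x" using v c fa by (metis valid_def funpow_0)
  qed
qed

lemma pp_valid_range:
  assumes a: "a < N"
  shows "valid a (pp a) \<and> (2 \<le> M \<longrightarrow> 1 \<le> pp a \<and> pp a < M)"
proof (cases "\<forall>x<N. f x = x")
  case True
  then have "pp a = 1" by (simp add: skew_pi_def)
  moreover have "valid a 1" using True a by (simp add: valid_def f_lt)
  moreover have "M = 1" using True triv_M by simp
  ultimately show ?thesis by simp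
next
  case False
  obtain i where vi: "valid a i" using skewp a by blast
  have vim: "valid a (i mod M)" unfolding valid_def
  proof (intro allI impI)
    fix b assume b: "b < N"
    have "(f^^i) b = (f^^(i mod M)) b" using fpow_mod[OF b] .
    then show "f ((a + b) mod N) = (f a + (f^^(i mod M)) b) mod N" using vi b unfolding valid_def by metis
  qed
  have "i mod M \<noteq> 0" using vim valid_zero_triv a False by metis
  then have r: "i mod M \<in> {1..<M}" using M_pos by simp
  have "(THE j. j \<in> {1..<M} \<and> valid a j) = i mod M"
  proof (rule the_equality)
    show "i mod M \<in> {1..<M} \<and> valid a (i mod M)" using r vim by simp
  next
    fix j assume j: "j \<in> {1..<M} \<and> valid a j"
    then have "j mod M = i mod M mod M" using valid_unique vim by blast
    then show "j = i mod M" using j by simp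
  qed
  moreover have "pp a = (THE j. j \<in> {1..<M} \<and> valid a j)"
    unfolding skew_pi_def valid_def by (simp only: if_not_P[OF False])
  ultimately have "pp a = i mod M" by simp
  then show ?thesis using r vim by simp
qed

lemma pp_valid: "a < N \<Longrightarrow> valid a (pp a)"
  using pp_valid_range by blast

lemma pp_range: "2 \<le> M \<Longrightarrow> a < N \<Longrightarrow> 1 \<le> pp a \<and> pp a < M"
  using pp_valid_range by blast

lemma pp0: "pp 0 = 1"
proof (cases "\<forall>x<N. f x = x")
  case True then show ?thesis by (simp add: skew_pi_def)
next
  case False
  have M2: "2 \<le> M"
  proof (rule ccontr)
    assume "\<not> 2 \<le> M"
    then have "M = 1" using M_pos by simp
    then show False using False M_triv by blast
  qed
  have v1: "valid 0 1" using f0 by (simp add: valid_def f_lt)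
  have "pp 0 mod M = 1 mod M" using valid_unique[OF pp_valid v1] N_pos by simp
  then show ?thesis using pp_range[OF M2, of 0] N_pos M2 by simp
qed

lemma sg_Suc: "sg (Suc k) a = sg k a + pp ((f^^k) a)"
  by simp

lemma fpow_add:
  assumes a: "a < N" and b: "b < N"
  shows "(f^^k) ((a + b) mod N) = ((f^^k) a + (f^^(sg k a)) b) mod N"
proof (induction k)
  case 0 then show ?case using a b by simp
next
  case (Suc k)
  have fa: "(f^^k) a < N" using fpow_lt a by simp
  have fb: "(f^^(sg k a)) b < N" using fpow_lt b by simp
  have "(f^^Suc k) ((a + b) mod N) = f ((f^^k) ((a + b) mod N))" by simp
  also have "\<dots> = f (((f^^k) a + (f^^(sg k a)) b) mod N)" using Suc by simp
  also have "\<dots> = (f ((f^^k) a) + (f^^(pp ((f^^k) a))) ((f^^(sg k a)) b)) mod N"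
    using pp_valid[OF fa] fb unfolding valid_def by blast
  also have "(f^^(pp ((f^^k) a))) ((f^^(sg k a)) b) = (f^^(sg (Suc k) a)) b"
    by (simp add: funpow_add add.commute)
  finally show ?case by simp
qed

lemma sg_mod_eq:
  assumes a: "a < N" and e: "\<forall>x<N. (f^^j) x = (f^^k) x"
  shows "sg j a mod M = sg k a mod M"
proof -
  have "\<forall>x<N. (f^^(sg j a)) x = (f^^(sg k a)) x"
  proof (intro allI impI)
    fix x assume x: "x < N"
    have ax: "(a + x) mod N < N" using N_pos by simp
    have "(f^^j) ((a + x) mod N) = (f^^k) ((a + x) mod N)" using e ax by blast
    then have "((f^^j) a + (f^^(sg j a)) x) mod N = ((f^^k) a + (f^^(sg k a)) x) mod N"
      using fpow_add[OF a x, of j] fpow_add[OF a x, of k] by simp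
    moreover have "(f^^j) a = (f^^k) a" using e a by blast
    ultimately have "((f^^j) a + (f^^(sg j a)) x) mod N = ((f^^j) a + (f^^(sg k a)) x) mod N" by simp
    then show "(f^^(sg j a)) x = (f^^(sg k a)) x"
      using mod_add_cancel_lt[of "(f^^j) a" "(f^^(sg j a)) x" N "(f^^(sg k a)) x"] fpow_lt x by blast
  qed
  then show ?thesis by (rule fpow_eq_mod)
qed

lemma sg_mod: "a < N \<Longrightarrow> sg k a mod M = sg (k mod M) a mod M"
  using sg_mod_eq fpow_mod by blast

lemma cocycle:
  assumes y: "y < N" and z: "z < N"
  shows "sg k ((y + z) mod N) mod M = sg (sg k y) z mod M"
proof -
  have Np: "0 < N" using N_pos by simp
  have "\<forall>w<N. (f^^(sg k ((y + z) mod N))) w = (f^^(sg (sg k y) z)) w"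
  proof (intro allI impI)
    fix w assume w: "w < N"
    have yz: "(y + z) mod N < N" using Np by simp
    have zw: "(z + w) mod N < N" using Np by simp
    have eq: "((y + z) mod N + w) mod N = (y + (z + w) mod N) mod N"
      by (simp add: add.assoc mod_add_left_eq mod_add_right_eq)
    let ?X = "(f^^k) y + (f^^(sg k y)) z"
    have "(f^^k) (((y + z) mod N + w) mod N) = ((f^^k) ((y + z) mod N) + (f^^(sg k ((y + z) mod N))) w) mod N"
      using fpow_add[OF yz w] by simp
    also have "\<dots> = (?X + (f^^(sg k ((y + z) mod N))) w) mod N"
      using fpow_add[OF y z, of k] by (simp add: mod_add_left_eq)
    finally have L: "(f^^k) (((y + z) mod N + w) mod N) = (?X + (f^^(sg k ((y + z) mod N))) w) mod N" .
    have "(f^^k) ((y + (z + w) mod N) mod N) = ((f^^k) y + (f^^(sg k y)) ((z + w) mod N)) mod N"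
      using fpow_add[OF y zw] by simp
    also have "\<dots> = ((f^^k) y + ((f^^(sg k y)) z + (f^^(sg (sg k y) z)) w) mod N) mod N"
      using fpow_add[OF z w, of "sg k y"] by simp
    also have "\<dots> = (?X + (f^^(sg (sg k y) z)) w) mod N"
      by (simp add: mod_add_right_eq add.assoc)
    finally have R: "(f^^k) ((y + (z + w) mod N) mod N) = (?X + (f^^(sg (sg k y) z)) w) mod N" .
    have "(?X + (f^^(sg k ((y + z) mod N))) w) mod N = (?X + (f^^(sg (sg k y) z)) w) mod N"
      using L R eq by simp
    then show "(f^^(sg k ((y + z) mod N))) w = (f^^(sg (sg k y) z)) w"
      using mod_add_cancel_lt[of ?X "(f^^(sg k ((y + z) mod N))) w" N "(f^^(sg (sg k y) z)) w"] fpow_lt w by blast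
  qed
  then show ?thesis by (rule fpow_eq_mod)
qed

lemma fpow_sum:
  assumes "2 \<le> N" and x: "x < N"
  shows "(f^^k) x = (\<Sum>i<x. (f^^(sg k i)) 1) mod N"
  using x
proof (induction x)
  case 0 then show ?case by (simp add: fpow0)
next
  case (Suc i)
  have i: "i < N" using Suc by simp
  have "(f^^k) (Suc i) = (f^^k) ((i + 1) mod N)" using Suc by simp
  also have "\<dots> = ((f^^k) i + (f^^(sg k i)) 1) mod N" using fpow_add[OF i, of 1] assms(1) by simp
  also have "\<dots> = ((\<Sum>j<i. (f^^(sg k j)) 1) + (f^^(sg k i)) 1) mod N"
    using Suc i by (simp add: mod_add_left_eq)
  finally show ?case by simp
qed

end


context skew begin

abbreviation gd where "gd \<equiv> derived N f"

lemma gd_eq: "2 \<le> N \<Longrightarrow> gd a = sg a 1 mod M"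
  by (simp add: derived_def skew_sigma_def)

lemma gd_lt: "2 \<le> N \<Longrightarrow> gd a < M"
  using gd_eq M_pos by simp

lemma gd0: "gd 0 = 0"
  by (simp add: derived_def skew_sigma_def)

lemma sg_split: "sg (a + b) y = sg a y + sg b ((f^^a) y)"
proof (induction b)
  case 0 then show ?case by simp
next
  case (Suc b)
  have "(f^^(a + b)) y = (f^^(b + a)) y" by (simp add: add.commute)
  also have "\<dots> = (f^^b) ((f^^a) y)" by (simp add: funpow_add)
  finally have "(f^^(a + b)) y = (f^^b) ((f^^a) y)" .
  then show ?case using Suc by simp
qed

lemma sg_zero: "sg k 0 = k"
  by (simp add: fpow0 pp0)

lemma sg_g:
  assumes N2: "2 \<le> N" and y: "y < N"
  shows "sg k y mod M = (gd ^^ y) (k mod M)"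
  using y
proof (induction y)
  case 0 then show ?case by (simp add: sg_zero)
next
  case (Suc y)
  have y: "y < N" using Suc by simp
  have "sg k (Suc y) mod M = sg k ((y + 1) mod N) mod M" using Suc by simp
  also have "\<dots> = sg (sg k y) 1 mod M" using cocycle[OF y, of 1] N2 by simp
  also have "\<dots> = sg (sg k y mod M) 1 mod M" using sg_mod[of 1 "sg k y"] N2 by simp
  also have "\<dots> = gd (sg k y mod M)" using gd_eq N2 by simp
  also have "\<dots> = gd ((gd ^^ y) (k mod M))" using Suc y by simp
  finally show ?case by simp
qed

lemma gd_powN:
  assumes N2: "2 \<le> N" and k: "k < M"
  shows "(gd ^^ N) k = k"
proof -
  have y: "N - 1 < N" using N2 by simp
  have "k = sg k 0 mod M" using k by (simp add: sg_zero)
  also have "\<dots> = sg k ((N - 1 + 1) mod N) mod M" using N2 by simp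
  also have "\<dots> = sg (sg k (N - 1)) 1 mod M" using cocycle[OF y, of 1] N2 by simp
  also have "\<dots> = sg (sg k (N - 1) mod M) 1 mod M" using sg_mod[of 1 "sg k (N-1)"] N2 by simp
  also have "\<dots> = gd ((gd ^^ (N - 1)) (k mod M))" using gd_eq N2 sg_g[OF N2 y] by simp
  also have "\<dots> = (gd ^^ N) k" using k N2
    by (metis Suc_diff_1 funpow.simps(2) le_trans mod_less o_apply one_le_numeral zero_less_one less_le_trans)
  finally show ?thesis by simp
qed

lemma gd_skew_eq:
  assumes N2: "2 \<le> N" and a: "a < M" and b: "b < M"
  shows "gd ((a + b) mod M) = (gd a + (gd ^^ ((f^^a) 1)) b) mod M"
proof -
  have o: "(f^^a) 1 < N" using fpow_lt N2 by simp
  have "gd ((a + b) mod M) = sg ((a + b) mod M) 1 mod M" using gd_eq N2 by simp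
  also have "\<dots> = sg (a + b) 1 mod M" using sg_mod[of 1 "a + b"] N2 by simp
  also have "\<dots> = (sg a 1 + sg b ((f^^a) 1)) mod M" by (simp add: sg_split)
  also have "\<dots> = (sg a 1 mod M + sg b ((f^^a) 1) mod M) mod M" by (simp add: mod_add_eq)
  also have "\<dots> = (gd a + (gd ^^ ((f^^a) 1)) b) mod M"
    using gd_eq N2 sg_g[OF N2 o, of b] b by simp
  finally show ?thesis .
qed

lemma gd_inj:
  assumes N2: "2 \<le> N"
  shows "inj_on gd {..<M}"
proof (rule inj_onI)
  fix x y assume x: "x \<in> {..<M}" and y: "y \<in> {..<M}" and e: "gd x = gd y"
  have "(gd ^^ N) x = (gd ^^ (N - 1)) (gd x)" using N2
    by (metis Suc_diff_1 funpow_Suc_right le_trans o_apply one_le_numeral zero_less_one less_le_trans)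
  moreover have "(gd ^^ N) y = (gd ^^ (N - 1)) (gd y)" using N2
    by (metis Suc_diff_1 funpow_Suc_right le_trans o_apply one_le_numeral zero_less_one less_le_trans)
  ultimately show "x = y" using e gd_powN[OF N2] x y by simp
qed

lemma derived_skew:
  assumes N2: "2 \<le> N"
  shows "skew_morphism M gd"
proof -
  have img: "gd ` {..<M} \<subseteq> {..<M}" using gd_lt N2 by auto
  have "gd ` {..<M} = {..<M}" using endo_inj_surj[OF _ img gd_inj[OF N2]] by simp
  then have bij: "bij_betw gd {..<M} {..<M}" using gd_inj[OF N2] by (simp add: bij_betw_def)
  show ?thesis unfolding skew_morphism_def
    using M_pos bij gd0 gd_skew_eq[OF N2] by (intro conjI) (auto intro!: exI[of _ "(f^^_) 1"])
qed

lemma pp_orbit: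
  assumes N2: "2 \<le> N" and M2: "2 \<le> M" and x: "x < N"
  shows "pp x = (gd ^^ x) 1"
proof -
  have "sg 1 x = pp x" by simp
  then have "pp x mod M = (gd ^^ x) (1 mod M)" using sg_g[OF N2 x, of 1] by simp
  then show ?thesis using pp_range[OF M2 x] M2 by simp
qed

end


context skew begin

lemma M_lt_N:
  assumes N2: "2 \<le> N"
  shows "M < N"
proof (cases "M = 1")
  case True then show ?thesis using N2 by simp
next
  case False
  then have M2: "2 \<le> M" using M_pos by simp
  have one: "1 < N" using N2 by simp
  define L where "L = (LEAST l. 0 < l \<and> (f^^l) 1 = 1)"
  have Mex: "0 < M \<and> (f^^M) 1 = 1" using M_pos M_id one by simp
  have Lprop: "0 < L \<and> (f^^L) 1 = 1" unfolding L_def by (rule LeastI, rule Mex)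
  have LM: "L \<le> M" unfolding L_def by (rule Least_le, rule Mex)
  have Lmin: "0 < l \<Longrightarrow> l < L \<Longrightarrow> (f^^l) 1 \<noteq> 1" for l
    unfolding L_def using not_less_Least by blast
  have Lmult: "(f^^(L*t)) 1 = 1" for t
  proof (induction t)
    case 0 then show ?case by simp
  next
    case (Suc t)
    have "(f^^(L*Suc t)) 1 = (f^^L) ((f^^(L*t)) 1)" by (simp add: funpow_add)
    then show ?case using Suc Lprop by simp
  qed
  have orb_per: "(f^^k) 1 = (f^^(k mod L)) 1" for k
  proof -
    have "k = k mod L + L * (k div L)" by simp
    then have "(f^^k) 1 = (f^^(k mod L)) ((f^^(L * (k div L))) 1)"
      by (metis funpow_add o_apply)
    then show ?thesis using Lmult by simp
  qed
  have LdM: "L dvd M"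
  proof -
    have "(f^^(M mod L)) 1 = 1" using orb_per[of M] Mex by simp
    moreover have "M mod L < L" using Lprop by simp
    ultimately have "M mod L = 0" using Lmin by (metis neq0_conv)
    then show ?thesis by (simp add: dvd_eq_mod_eq_0)
  qed
  have LN: "L \<le> N - 1"
  proof -
    have inj: "inj_on (\<lambda>i. (f^^i) 1) {..<L}"
    proof (rule inj_onI)
      fix i j assume i: "i \<in> {..<L}" and j: "j \<in> {..<L}" and e: "(f^^i) 1 = (f^^j) 1"
      show "i = j"
      proof (rule ccontr)
        assume "i \<noteq> j"
        have "\<exists>a b. a < b \<and> b < L \<and> (f^^a) 1 = (f^^b) 1"
        proof (cases "i < j")
          case True then show ?thesis using i j e by (intro exI[of _ i] exI[of _ j]) simp
        next
          case False then have "j < i" using \<open>i \<noteq> j\<close> by simp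
          then show ?thesis using i j e by (intro exI[of _ j] exI[of _ i]) simp
        qed
        then obtain a b where ab: "a < b" "b < L" "(f^^a) 1 = (f^^b) 1" by blast
        have "(f^^a) ((f^^(b - a)) 1) = (f^^b) 1"
          using ab(1) by (metis funpow_add le_add_diff_inverse less_imp_le o_apply)
        then have "(f^^a) ((f^^(b - a)) 1) = (f^^a) 1" using ab(3) by simp
        then have "(f^^(b - a)) 1 = 1" using fpow_cancel[of "(f^^(b - a)) 1" 1 a] fpow_lt one by blast
        moreover have "b - a < L" "0 < b - a" using ab by auto
        ultimately show False using Lmin[of "b - a"] by blast
      qed
    qed
    have img: "(\<lambda>i. (f^^i) 1) ` {..<L} \<subseteq> {1..<N}"
    proof
      fix y assume "y \<in> (\<lambda>i. (f^^i) 1) ` {..<L}"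
      then obtain i where y: "y = (f^^i) 1" by blast
      have "y < N" using y fpow_lt one by simp
      moreover have "y \<noteq> 0"
      proof
        assume "y = 0"
        then have "(f^^i) 1 = (f^^i) 0" using y fpow0 by simp
        then show False using fpow_cancel[of 1 0 i] one by simp
      qed
      ultimately show "y \<in> {1..<N}" by simp
    qed
    have "card {..<L} \<le> card {1..<N}" by (rule card_inj_on_le[OF inj img]) simp
    then show ?thesis by simp
  qed
  have ident: "\<forall>x<N. (f^^L) x = x"
  proof (cases "L = M")
    case True then show ?thesis using M_id by simp
  next
    case False
    then have LltM: "L < M" using LM by simp
    have gL: "gd ((L + b) mod M) = (gd L + gd b) mod M" if b: "b < M" for b
      using gd_skew_eq[OF N2 LltM b] Lprop by simp
    have gmult: "gd ((j * L) mod M) = (j * gd L) mod M" for j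
    proof (induction j)
      case 0 then show ?case by (simp add: gd0)
    next
      case (Suc j)
      have "(Suc j * L) mod M = (L + (j * L) mod M) mod M" by (simp add: mod_add_right_eq)
      then have "gd ((Suc j * L) mod M) = (gd L + gd ((j * L) mod M)) mod M"
        using gL[of "(j * L) mod M"] M_pos by simp
      also have "\<dots> = (gd L + (j * gd L) mod M) mod M" using Suc by simp
      also have "\<dots> = (Suc j * gd L) mod M" by (simp add: mod_add_right_eq)
      finally show ?case .
    qed
    define q where "q = M div L"
    have qL: "q * L = M" using LdM unfolding q_def by simp
    have qpos: "0 < q" using qL M_pos by (cases q) auto
    have "gd ((q * L) mod M) = (q * gd L) mod M" by (rule gmult)
    then have "(q * gd L) mod M = 0" using qL gd0 by simp
    then have "M dvd q * gd L" by (simp add: dvd_eq_mod_eq_0)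
    then have "q * L dvd q * gd L" using qL by simp
    then have LgL: "L dvd gd L" using nat_mult_dvd_cancel1[OF qpos] by blast
    have gpres: "L dvd gd x" if Lx: "L dvd x" and xM: "x < M" for x
    proof -
      obtain j where j: "x = L * j" using Lx by (auto simp: dvd_def)
      then have "x = (j * L) mod M" using xM by (simp add: mult.commute)
      then have "gd x = (j * gd L) mod M" using gmult[of j] by simp
      moreover have "L dvd j * gd L" using LgL by simp
      ultimately show ?thesis using LdM dvd_mod by metis
    qed
    have gpow: "L dvd (gd^^i) L \<and> (gd^^i) L < M" for i
    proof (induction i)
      case 0 then show ?case using LltM by simp
    next
      case (Suc i)
      have "(gd^^Suc i) L = gd ((gd^^i) L)" by simp
      then show ?case using gpres[of "(gd^^i) L"] Suc gd_lt[OF N2] by simp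
    qed
    show ?thesis
    proof (intro allI impI)
      fix x assume x: "x < N"
      have "(f^^L) x = (\<Sum>i<x. (f^^(sg L i)) 1) mod N" using fpow_sum[OF N2 x] .
      also have "(\<Sum>i<x. (f^^(sg L i)) 1) = (\<Sum>i<x. (1::nat))"
      proof (rule sum.cong)
        fix i assume "i \<in> {..<x}"
        then have i: "i < N" using x by simp
        have "sg L i mod M = (gd^^i) L" using sg_g[OF N2 i, of L] LltM by simp
        then have "L dvd sg L i mod M" using gpow by simp
        then have "L dvd sg L i" using LdM by (simp add: dvd_mod_iff)
        then obtain t where "sg L i = L * t" by (auto simp: dvd_def)
        then show "(f^^(sg L i)) 1 = 1" using Lmult by simp
      qed simp
      finally show "(f^^L) x = x" using x by simp
    qed
  qed
  have "M \<le> L" using M_le Lprop ident by blast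
  then show ?thesis using LN N2 by simp
qed

end



lemma funpow_period:
  assumes "(h^^p) x = x"
  shows "(h^^k) x = (h^^(k mod p)) x"
proof -
  have pm: "(h^^(p*t)) x = x" for t
  proof (induction t)
    case 0 then show ?case by simp
  next
    case (Suc t)
    have "(h^^(p*Suc t)) x = (h^^p) ((h^^(p*t)) x)" by (simp add: funpow_add)
    then show ?case using Suc assms by simp
  qed
  have "k = k mod p + p * (k div p)" by simp
  then have "(h^^k) x = (h^^(k mod p)) ((h^^(p * (k div p))) x)"
    by (metis funpow_add o_apply)
  then show ?thesis using pm by simp
qed

context skew begin

lemma ord1: "N = 1 \<Longrightarrow> M = 1"
  using M_le[of 1] M_pos f0 by fastforce

lemma derived_skew_gen: "skew_morphism M gd"
proof (cases "2 \<le> N")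
  case True then show ?thesis using derived_skew by simp
next
  case False
  then have N1: "N = 1" using N_pos by simp
  then have M1: "M = 1" using ord1 by simp
  have b: "bij_betw gd {..<1} {..<1}" using gd0 by (simp add: bij_betw_def lessThan_Suc)
  show ?thesis unfolding skew_morphism_def M1 using b gd0 by simp
qed

lemma ord2_dvd:
  assumes N2: "2 \<le> N"
  shows "skew_ord M gd dvd N"
proof -
  interpret G: skew M gd using derived_skew[OF N2] by unfold_locales
  have "\<forall>x<M. (gd^^N) x = (gd^^0) x" using gd_powN[OF N2] by simp
  then have "N mod skew_ord M gd = 0 mod skew_ord M gd" by (rule G.fpow_eq_mod)
  then show ?thesis by (simp add: dvd_eq_mod_eq_0)
qed

lemma triple:
  assumes N2: "2 \<le> N" and M2: "2 \<le> M" and M22: "2 \<le> skew_ord M gd"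
  shows "(f^^a) 1 mod skew_ord M gd = (derived M gd ^^ a) 1"
proof -
  interpret G: skew M gd using derived_skew[OF N2] by unfold_locales
  define a' where "a' = a mod M"
  have a': "a' < M" using M_pos a'_def by simp
  have v: "G.valid a' ((f^^a') 1)"
    unfolding G.valid_def using gd_skew_eq[OF N2 a'] by blast
  have "(f^^a') 1 mod skew_ord M gd = G.pp a' mod skew_ord M gd"
    using G.valid_unique[OF v G.pp_valid[OF a']] .
  also have "\<dots> = G.pp a'" using G.pp_range[OF M22 a'] by simp
  also have "\<dots> = (derived M gd ^^ a') 1" using G.pp_orbit[OF M2 M22 a'] .
  finally have e: "(f^^a') 1 mod skew_ord M gd = (derived M gd ^^ a') 1" .
  have "(f^^a) 1 = (f^^a') 1" using fpow_mod[of 1 a] N2 a'_def by simp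
  moreover have "(derived M gd ^^ a) 1 = (derived M gd ^^ a') 1"
    unfolding a'_def by (rule funpow_period) (use G.gd_powN[OF M2, of 1] M22 in simp)
  ultimately show ?thesis using e by simp
qed

end



lemma derived_iter_Suc:
  "fst (derived_iter n \<phi> (Suc j)) = skew_ord (fst (derived_iter n \<phi> j)) (snd (derived_iter n \<phi> j))"
  "snd (derived_iter n \<phi> (Suc j)) = derived (fst (derived_iter n \<phi> j)) (snd (derived_iter n \<phi> j))"
  by (simp_all split: prod.split)

declare derived_iter.simps(2)[simp del]

locale chain =
  fixes n :: nat and \<phi> :: "nat \<Rightarrow> nat"
  assumes n2: "2 \<le> n" and skphi: "skew_morphism n \<phi>"
begin

abbreviation nn where "nn j \<equiv> fst (derived_iter n \<phi> j)"
abbreviation ff where "ff j \<equiv> snd (derived_iter n \<phi> j)"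

lemma ch_skew: "skew_morphism (nn j) (ff j)"
proof (induction j)
  case 0 then show ?case using skphi by simp
next
  case (Suc j)
  interpret skew "nn j" "ff j" using Suc by unfold_locales
  show ?case using derived_skew_gen by (simp add: derived_iter_Suc)
qed

lemma ch_pos: "1 \<le> nn j"
proof -
  interpret skew "nn j" "ff j" using ch_skew by unfold_locales
  show ?thesis using N_pos .
qed

lemma ch_dec: "2 \<le> nn j \<Longrightarrow> nn (Suc j) < nn j"
proof -
  assume a: "2 \<le> nn j"
  interpret skew "nn j" "ff j" using ch_skew by unfold_locales
  show ?thesis using M_lt_N[OF a] by (simp add: derived_iter_Suc)
qed

lemma ch_one: "nn j = 1 \<Longrightarrow> nn (Suc j) = 1"
proof -
  assume a: "nn j = 1"
  interpret skew "nn j" "ff j" using ch_skew by unfold_locales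
  show ?thesis using ord1[OF a] by (simp add: derived_iter_Suc)
qed

lemma ch_one_prop:
  assumes "nn j = 1" "j \<le> k" shows "nn k = 1"
  using assms(2)
proof (induction k rule: dec_induct)
  case base then show ?case using assms(1) by simp
next
  case (step k) then show ?case using ch_one by simp
qed

lemma ch_bound: "nn j + j \<le> n \<or> nn j = 1"
proof (induction j)
  case 0 then show ?case by simp
next
  case (Suc j)
  show ?case
  proof (cases "nn j = 1")
    case True then show ?thesis using ch_one by simp
  next
    case False
    then have "2 \<le> nn j" using ch_pos[of j] by simp
    then have "nn (Suc j) < nn j" by (rule ch_dec)
    then show ?thesis using Suc False by simp
  qed
qed

definition cc where "cc = (LEAST j. nn j = 1) - 1"

lemma cc_prop: "2 \<le> nn cc \<and> nn (Suc cc) = 1"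
proof -
  have ex: "nn n = 1" using ch_bound[of n] ch_pos[of n] by simp
  define k where "k = (LEAST j. nn j = 1)"
  have k1: "nn k = 1" unfolding k_def by (rule LeastI[of _ n]) (rule ex)
  have k0: "k \<noteq> 0" using k1 n2 by (metis derived_iter.simps(1) fst_conv numeral_le_one_iff semiring_norm(69))
  have "nn (k - 1) \<noteq> 1" unfolding k_def by (rule not_less_Least) (use k0 k_def in simp)
  then have "2 \<le> nn (k - 1)" using ch_pos[of "k - 1"] by simp
  moreover have "Suc (k - 1) = k" using k0 by simp
  ultimately show ?thesis using k1 unfolding cc_def k_def[symmetric] by simp
qed

lemma complexity_eq: "complexity n \<phi> = cc"
  unfolding complexity_def
proof (rule the_equality)
  show "2 \<le> nn cc \<and> nn (Suc cc) = 1" using cc_prop .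
next
  fix c assume c: "2 \<le> nn c \<and> nn (Suc c) = 1"
  show "c = cc"
  proof (rule ccontr)
    assume "c \<noteq> cc"
    then have "c < cc \<or> cc < c" by arith
    then show False
    proof
      assume "c < cc"
      then have "nn cc = 1" using ch_one_prop[of "Suc c" cc] c by simp
      then show False using cc_prop by simp
    next
      assume "cc < c"
      then have "nn c = 1" using ch_one_prop[of "Suc cc" c] cc_prop by simp
      then show False using c by simp
    qed
  qed
qed

lemma ch_ge2: "j \<le> cc \<Longrightarrow> 2 \<le> nn j"
proof -
  assume j: "j \<le> cc"
  have "nn j \<noteq> 1" using ch_one_prop[of j cc] j cc_prop by auto
  then show ?thesis using ch_pos[of j] by simp
qed

lemma ch_triple:
  assumes "j + 2 \<le> cc"
  shows "(ff j ^^ a) 1 mod nn (j + 2) = (ff (j + 2) ^^ a) 1 \<and> nn (j + 2) dvd nn j"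
proof -
  interpret skew "nn j" "ff j" using ch_skew by unfold_locales
  have N2: "2 \<le> nn j" using ch_ge2 assms by simp
  have M2: "2 \<le> M" using ch_ge2[of "Suc j"] assms by (simp add: derived_iter_Suc)
  have M22: "2 \<le> skew_ord M gd" using ch_ge2[of "Suc (Suc j)"] assms by (simp add: derived_iter_Suc)
  have e1: "nn (j + 2) = skew_ord M gd" by (simp add: derived_iter_Suc)
  have e2: "ff (j + 2) = derived M gd" by (simp add: derived_iter_Suc)
  show ?thesis using triple[OF N2 M2 M22, of a] ord2_dvd[OF N2] e1 e2 by simp
qed

lemma ch_main:
  assumes odd: "odd cc"
  shows "nn cc dvd nn 1 \<and> (\<forall>a. (ff 1 ^^ a) 1 mod nn cc = 1)"
proof -
  obtain t where t: "cc = 2 * t + 1" using odd by (metis oddE)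
  have m2: "2 \<le> nn cc" using cc_prop by simp
  have base: "(ff cc ^^ a) 1 = 1" for a
  proof -
    interpret skew "nn cc" "ff cc" using ch_skew by unfold_locales
    have "M = 1" using cc_prop by (simp add: derived_iter_Suc)
    then have fid: "ff cc x = x" if "x < nn cc" for x using M_triv that by simp
    show ?thesis by (induction a) (use fid m2 in simp_all)
  qed
  have "k \<le> t \<Longrightarrow> nn cc dvd nn (cc - 2 * k) \<and> (\<forall>a. (ff (cc - 2 * k) ^^ a) 1 mod nn cc = 1)" for k
  proof (induction k)
    case 0 then show ?case using base m2 by simp
  next
    case (Suc k)
    define j where "j = cc - 2 * Suc k"
    have jj: "j + 2 = cc - 2 * k" using Suc.prems t j_def by simp
    have j2: "j + 2 \<le> cc" using jj by simp
    have IH: "nn cc dvd nn (j + 2) \<and> (\<forall>a. (ff (j + 2) ^^ a) 1 mod nn cc = 1)" using Suc jj by simp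
    have "nn cc dvd nn j" using IH ch_triple[OF j2] dvd_trans by blast
    moreover have "(ff j ^^ a) 1 mod nn cc = 1" for a
    proof -
      have "(ff j ^^ a) 1 mod nn cc = (ff j ^^ a) 1 mod nn (j + 2) mod nn cc"
        using IH by (simp add: mod_mod_cancel)
      also have "\<dots> = (ff (j + 2) ^^ a) 1 mod nn cc" using ch_triple[OF j2] by simp
      finally show ?thesis using IH by simp
    qed
    ultimately show ?case using j_def by simp
  qed
  from this[of t] show ?thesis using t by simp
qed

end

theorem theorem4p4:
  fixes n :: nat and \<phi> \<psi> :: "nat \<Rightarrow> nat"
  assumes "2 \<le> n"
    and "skew_morphism n \<phi>" and "odd (complexity n \<phi>)"
    and "skew_morphism n \<psi>" and "odd (complexity n \<psi>)"
    and "\<psi> 1 = \<phi> 1"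
    and "skew_ord n \<psi> = skew_ord n \<phi>"
    and "\<forall>a < skew_ord n \<phi>. derived n \<psi> a = derived n \<phi> a"
    and "\<forall>x < n. (\<psi> ^^ auto_order n \<phi>) x = (\<phi> ^^ auto_order n \<phi>) x"
  shows "\<forall>x < n. \<psi> x = \<phi> x"
proof -
  note n2 = assms(1)
  interpret C: chain n \<phi> using assms(1,2) by unfold_locales
  interpret P: skew n \<phi> using assms(2) by unfold_locales
  interpret Q: skew n \<psi> using assms(4) by unfold_locales
  have cc: "complexity n \<phi> = C.cc" by (rule C.complexity_eq)
  define m where "m = auto_order n \<phi>"
  have m: "m = C.nn C.cc" unfolding m_def auto_order_def cc ..
  have oc: "odd C.cc" using assms(3) cc by simp
  have c1: "1 \<le> C.cc" using oc by (cases "C.cc") auto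
  have M2: "2 \<le> P.M" using C.ch_ge2[OF c1] by (simp add: derived_iter_Suc)
  have QM: "Q.M = P.M" using assms(7) .
  have M2': "2 \<le> Q.M" using M2 QM by simp
  have main: "\<forall>a. (P.gd ^^ a) 1 mod m = 1"
    using C.ch_main[OF oc] m by (simp add: derived_iter_Suc)
  have m2: "2 \<le> m" using C.cc_prop m by simp
  have orbit_eq: "(Q.gd ^^ i) 1 = (P.gd ^^ i) 1 \<and> (P.gd ^^ i) 1 < P.M" for i
  proof (induction i)
    case 0 then show ?case using M2 by simp
  next
    case (Suc i)
    then show ?case using assms(8) P.gd_lt[OF n2] by simp
  qed
  have pow_eq: "((\<psi> ^^ m) ^^ t) y = ((\<phi> ^^ m) ^^ t) y" if y: "y < n" for t y
  proof (induction t)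
    case 0 then show ?case by simp
  next
    case (Suc t)
    have "((\<phi> ^^ m) ^^ t) y < n" using P.fpow_lt[OF y] by (simp add: funpow_mult)
    then show ?case using Suc assms(9) m_def by simp
  qed
  have term_eq: "(\<psi> ^^ Q.pp i) 1 = (\<phi> ^^ P.pp i) 1" if i: "i < n" for i
  proof -
    have "Q.pp i = (Q.gd ^^ i) 1" using Q.pp_orbit[OF n2 M2' i] .
    also have "\<dots> = (P.gd ^^ i) 1" using orbit_eq by simp
    finally have qp: "Q.pp i = (P.gd ^^ i) 1" .
    have pp: "P.pp i = (P.gd ^^ i) 1" using P.pp_orbit[OF n2 M2 i] .
    define e where "e = (P.gd ^^ i) 1"
    have "e mod m = 1" using main e_def by simp
    then have e: "e = m * (e div m) + 1" by (metis mod_mult_div_eq add.commute mult.commute)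
    have "(\<phi> ^^ e) 1 = ((\<phi> ^^ m) ^^ (e div m)) (\<phi> 1)"
      by (subst e) (simp add: funpow_add funpow_mult funpow_swap1)
    moreover have "(\<psi> ^^ e) 1 = ((\<psi> ^^ m) ^^ (e div m)) (\<psi> 1)"
      by (subst e) (simp add: funpow_add funpow_mult funpow_swap1)
    moreover have "\<phi> 1 < n" using P.f_lt n2 by simp
    ultimately have "(\<psi> ^^ e) 1 = (\<phi> ^^ e) 1" using pow_eq assms(6) by simp
    then show ?thesis using qp pp e_def by simp
  qed
  show ?thesis
  proof (intro allI impI)
    fix x assume x: "x < n"
    have px: "\<phi> x = (\<Sum>i<x. (\<phi> ^^ P.pp i) 1) mod n" using P.fpow_sum[OF n2 x, of 1] by simp
    have qx: "\<psi> x = (\<Sum>i<x. (\<psi> ^^ Q.pp i) 1) mod n" using Q.fpow_sum[OF n2 x, of 1] by simp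
    have "(\<Sum>i<x. (\<psi> ^^ Q.pp i) 1) = (\<Sum>i<x. (\<phi> ^^ P.pp i) 1)"
      using term_eq x by (intro sum.cong) auto
    then show "\<psi> x = \<phi> x" using px qx by simp
  qed
qed


end
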